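(* Consider a market with $n$ sellers of true costs $c_1,\dots,c_n\in[0,1]$ and $n$ buyers of true values $v_1,\dots,v_n\in[0,1]$. Suppose reals $\underline c_i\le c_i\le\bar c_i$ and $\underline v_j\le v_j\le\bar v_j$ are known with $\bar c_i-\underline c_i\le\delta$ and $\bar v_j-\underline v_j\le\delta$ for all $i,j$. Let $M$ be a matching maximizing gains-from-trade when sellers have costs $\bar c_i$ and buyers have values $\underline v_j$, let $S_1$, $B_1$ be the sellers and buyers matched in $M$, and post the segmented-price mechanism: price $\max_{i\in S_1}\bar c_i$ to sellers in $S_1$ and price $0$ to the other sellers; price $\min_{j\in B_1}\underline v_j$ to buyers in $B_1$ and price $1$ to the other buyers. Then the realized gains-from-trade (under any maximum-cardinality matching of the accepting traders) is at least $\mathrm{GFT}^\star-2n\delta$, where $\mathrm{GFT}^\star$ is the optimal gains-from-trade for the true costs and values.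
   Context: A seller accepts a price $p$ iff $p\ge$ its cost; a buyer accepts price $q$ iff $q\le$ its value (ties in favour of accepting). A maximum-cardinality matching between accepting sellers and accepting buyers is formed, and the GFT of a matching $M$ is $\sum_{(i,j)\in M}(v_j-c_i)$. $\mathrm{GFT}^\star$ is the maximum GFT over all matchings between sellers and buyers. A segmented-price mechanism partitions sellers into at most two groups and buyers into at most two groups and posts one price per group. *)

theory Defs
  imports Complex_Main
begin

text \<open>Sellers and buyers are both indexed by 0..<n. A matching is a set of
(seller, buyer) pairs in which each seller and each buyer occurs at most once.\<close>

definition is_matching :: "nat \<Rightarrow> (nat \<times> nat) set \<Rightarrow> bool" where
  "is_matching n M \<longleftrightarrow> M \<subseteq> {..<n} \<times> {..<n} \<and>
     (\<forall>(i,j)\<in>M. \<forall>(i',j')\<in>M. (i = i') = (j = j'))"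

definition gft :: "(nat \<Rightarrow> real) \<Rightarrow> (nat \<Rightarrow> real) \<Rightarrow> (nat \<times> nat) set \<Rightarrow> real" where
  "gft c v M = (\<Sum>(i,j)\<in>M. v j - c i)"

definition GFT_star :: "nat \<Rightarrow> (nat \<Rightarrow> real) \<Rightarrow> (nat \<Rightarrow> real) \<Rightarrow> real" where
  "GFT_star n c v = Max (gft c v ` {M. is_matching n M})"

definition gft_optimal :: "nat \<Rightarrow> (nat \<Rightarrow> real) \<Rightarrow> (nat \<Rightarrow> real) \<Rightarrow> (nat \<times> nat) set \<Rightarrow> bool" where
  "gft_optimal n c v M \<longleftrightarrow> is_matching n M \<and>
     (\<forall>M'. is_matching n M' \<longrightarrow> gft c v M' \<le> gft c v M)"

definition accepting_sellers :: "nat \<Rightarrow> (nat \<Rightarrow> real) \<Rightarrow> (nat \<Rightarrow> real) \<Rightarrow> nat set" where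
  "accepting_sellers n c ps = {i. i < n \<and> c i \<le> ps i}"

definition accepting_buyers :: "nat \<Rightarrow> (nat \<Rightarrow> real) \<Rightarrow> (nat \<Rightarrow> real) \<Rightarrow> nat set" where
  "accepting_buyers n v pb = {j. j < n \<and> pb j \<le> v j}"

definition max_card_matching :: "nat \<Rightarrow> nat set \<Rightarrow> nat set \<Rightarrow> (nat \<times> nat) set \<Rightarrow> bool" where
  "max_card_matching n AS AB M \<longleftrightarrow> is_matching n M \<and> M \<subseteq> AS \<times> AB \<and>
     (\<forall>M'. is_matching n M' \<and> M' \<subseteq> AS \<times> AB \<longrightarrow> card M' \<le> card M)"

end

theory Submission
  imports Defs
begin

lemma match_fin: "is_matching n M \<Longrightarrow> finite M"
  unfolding is_matching_def by (meson finite_SigmaI finite_lessThan finite_subset)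

lemma match_inj: "is_matching n M \<Longrightarrow> inj_on fst M \<and> inj_on snd M"
  unfolding is_matching_def inj_on_def by fastforce

lemma match_range: "is_matching n M \<Longrightarrow> fst ` M \<subseteq> {..<n} \<and> snd ` M \<subseteq> {..<n}"
  unfolding is_matching_def by force

lemma gft_split: "is_matching n M \<Longrightarrow> gft c v M = (\<Sum>j\<in>snd`M. v j) - (\<Sum>i\<in>fst`M. c i)"
proof -
  assume m: "is_matching n M"
  have "gft c v M = (\<Sum>p\<in>M. v (snd p) - c (fst p))"
    unfolding gft_def by (simp add: case_prod_beta)
  also have "\<dots> = (\<Sum>p\<in>M. v (snd p)) - (\<Sum>p\<in>M. c (fst p))" by (rule sum_subtractf)
  also have "\<dots> = (\<Sum>j\<in>snd`M. v j) - (\<Sum>i\<in>fst`M. c i)"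
    using match_inj[OF m] by (simp add: sum.reindex)
  finally show ?thesis .
qed

lemma card_fst: "is_matching n M \<Longrightarrow> card (fst ` M) = card M \<and> card (snd ` M) = card M"
  using match_inj card_image by blast

lemma card_le_n: "is_matching n M \<Longrightarrow> card M \<le> n"
  using card_fst[of n M] match_range[of n M]
  by (metis card_lessThan card_mono finite_lessThan)

theorem lemma5p6:
  fixes n :: nat and \<delta> :: real
    and c v cl cu vl vu :: "nat \<Rightarrow> real"
    and M Mr :: "(nat \<times> nat) set"
  assumes c_range: "\<And>i. i < n \<Longrightarrow> 0 \<le> c i \<and> c i \<le> 1"
      and v_range: "\<And>j. j < n \<Longrightarrow> 0 \<le> v j \<and> v j \<le> 1"
      and c_bounds: "\<And>i. i < n \<Longrightarrow> cl i \<le> c i \<and> c i \<le> cu i \<and> cu i - cl i \<le> \<delta>"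
      and v_bounds: "\<And>j. j < n \<Longrightarrow> vl j \<le> v j \<and> v j \<le> vu j \<and> vu j - vl j \<le> \<delta>"
      and M_opt: "gft_optimal n cu vl M"
      and Mr_def: "max_card_matching n
            (accepting_sellers n c (\<lambda>i. if i \<in> fst ` M then Max (cu ` fst ` M) else 0))
            (accepting_buyers n v (\<lambda>j. if j \<in> snd ` M then Min (vl ` snd ` M) else 1))
            Mr"
  shows "gft c v Mr \<ge> GFT_star n c v - 2 * real n * \<delta>"
proof -
  have mM: "is_matching n M" using M_opt unfolding gft_optimal_def by blast
  have mR: "is_matching n Mr" using Mr_def unfolding max_card_matching_def by blast
  have finM: "finite M" using match_fin[OF mM] .
  have finR: "finite Mr" using match_fin[OF mR] .
  have rM: "fst ` M \<subseteq> {..<n}" "snd ` M \<subseteq> {..<n}" using match_range[OF mM] by auto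
  have rR: "fst ` Mr \<subseteq> {..<n}" "snd ` Mr \<subseteq> {..<n}" using match_range[OF mR] by auto
  have dpos: "0 \<le> \<delta>" if "0 < n"
    using c_bounds[of 0] that by linarith
  have nd: "0 \<le> real n * \<delta>"
    using dpos by (cases "n = 0") auto
  have Msub: "M \<subseteq> accepting_sellers n c (\<lambda>i. if i \<in> fst ` M then Max (cu ` fst ` M) else 0)
      \<times> accepting_buyers n v (\<lambda>j. if j \<in> snd ` M then Min (vl ` snd ` M) else 1)"
  proof
    fix p assume p: "p \<in> M"
    obtain i j where pij: "p = (i, j)" by fastforce
    have i: "i \<in> fst ` M" and j: "j \<in> snd ` M" using p pij by force+
    have "i < n" "j < n" using i j rM by auto
    have "c i \<le> cu i" using c_bounds[OF \<open>i < n\<close>] by blast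
    also have "cu i \<le> Max (cu ` fst ` M)" using i finM by auto
    finally have ci: "c i \<le> Max (cu ` fst ` M)" .
    have "Min (vl ` snd ` M) \<le> vl j" using j finM by auto
    also have "vl j \<le> v j" using v_bounds[OF \<open>j < n\<close>] by blast
    finally have vj: "Min (vl ` snd ` M) \<le> v j" .
    show "p \<in> accepting_sellers n c (\<lambda>i. if i \<in> fst ` M then Max (cu ` fst ` M) else 0)
      \<times> accepting_buyers n v (\<lambda>j. if j \<in> snd ` M then Min (vl ` snd ` M) else 1)"
      using pij i j ci vj \<open>i < n\<close> \<open>j < n\<close>
      unfolding accepting_sellers_def accepting_buyers_def by auto
  qed
  have cardle: "card M \<le> card Mr"
    using Mr_def mM Msub unfolding max_card_matching_def by blast
  have sell: "\<And>i. i \<in> fst ` Mr \<Longrightarrow> i \<notin> fst ` M \<Longrightarrow> c i = 0"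
  proof -
    fix i assume a: "i \<in> fst ` Mr" "i \<notin> fst ` M"
    then obtain j where "(i, j) \<in> Mr" by force
    then have "i \<in> accepting_sellers n c (\<lambda>i. if i \<in> fst ` M then Max (cu ` fst ` M) else 0)"
      using Mr_def unfolding max_card_matching_def by blast
    then have "c i \<le> 0" "i < n" using a unfolding accepting_sellers_def by auto
    then show "c i = 0" using c_range by force
  qed
  have buy: "\<And>j. j \<in> snd ` Mr \<Longrightarrow> j \<notin> snd ` M \<Longrightarrow> v j = 1"
  proof -
    fix j assume a: "j \<in> snd ` Mr" "j \<notin> snd ` M"
    then obtain i where "(i, j) \<in> Mr" by force
    then have "j \<in> accepting_buyers n v (\<lambda>j. if j \<in> snd ` M then Min (vl ` snd ` M) else 1)"
      using Mr_def unfolding max_card_matching_def by blast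
    then have "1 \<le> v j" "j < n" using a unfolding accepting_buyers_def by auto
    then show "v j = 1" using v_range by force
  qed
  let ?A = "fst ` Mr" and ?B = "snd ` Mr" and ?S = "fst ` M" and ?T = "snd ` M"
  have fA: "finite ?A" "finite ?B" "finite ?S" "finite ?T" using finM finR by auto
  have sc1: "(\<Sum>i\<in>?A. c i) = (\<Sum>i\<in>?A \<inter> ?S. c i) + (\<Sum>i\<in>?A - ?S. c i)"
    using fA by (metis sum.Int_Diff)
  have sc2: "(\<Sum>i\<in>?A - ?S. c i) = 0" using sell by (intro sum.neutral) auto
  have sc3: "(\<Sum>i\<in>?A \<inter> ?S. c i) \<le> (\<Sum>i\<in>?S. c i)"
    using fA rM c_range by (intro sum_mono2) auto
  have sellsum: "(\<Sum>i\<in>?A. c i) \<le> (\<Sum>i\<in>?S. c i)" using sc1 sc2 sc3 by linarith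
  have sb1: "(\<Sum>j\<in>?B. v j) = (\<Sum>j\<in>?B \<inter> ?T. v j) + (\<Sum>j\<in>?B - ?T. v j)"
    using fA by (metis sum.Int_Diff)
  have sb2: "(\<Sum>j\<in>?B - ?T. v j) = real (card (?B - ?T))" using buy by simp
  have sb3: "(\<Sum>j\<in>?T. v j) = (\<Sum>j\<in>?T \<inter> ?B. v j) + (\<Sum>j\<in>?T - ?B. v j)"
    using fA by (metis sum.Int_Diff)
  have sb4: "(\<Sum>j\<in>?T - ?B. v j) \<le> (\<Sum>j\<in>?T - ?B. 1)"
    using rM v_range by (intro sum_mono) auto
  have cB: "card ?T \<le> card ?B" using cardle card_fst[OF mM] card_fst[OF mR] by simp
  have cB1: "card ?B = card (?B \<inter> ?T) + card (?B - ?T)"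
    using fA by (metis card_Int_Diff)
  have cB2: "card ?T = card (?T \<inter> ?B) + card (?T - ?B)"
    using fA by (metis card_Int_Diff)
  have cB3: "card (?T - ?B) \<le> card (?B - ?T)" using cB cB1 cB2 by (simp add: Int_commute)
  have buysum: "(\<Sum>j\<in>?T. v j) \<le> (\<Sum>j\<in>?B. v j)"
    using sb1 sb2 sb3 sb4 cB3 by (simp add: Int_commute)
  have g1: "gft c v M \<le> gft c v Mr"
    using gft_split[OF mM] gft_split[OF mR] sellsum buysum by simp
  have g2: "gft cu vl M \<le> gft c v M"
    unfolding gft_split[OF mM]
  proof -
    have "(\<Sum>j\<in>?T. vl j) \<le> (\<Sum>j\<in>?T. v j)" using rM v_bounds by (intro sum_mono) auto
    moreover have "(\<Sum>i\<in>?S. c i) \<le> (\<Sum>i\<in>?S. cu i)" using rM c_bounds by (intro sum_mono) auto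
    ultimately show "(\<Sum>j\<in>?T. vl j) - (\<Sum>i\<in>?S. cu i) \<le> (\<Sum>j\<in>?T. v j) - (\<Sum>i\<in>?S. c i)"
      by linarith
  qed
  have g3: "gft c v M' \<le> gft c v M + 2 * real n * \<delta>" if mM': "is_matching n M'" for M'
  proof -
    have fM': "finite M'" using match_fin[OF mM'] .
    have "gft c v M' = (\<Sum>p\<in>M'. v (snd p) - c (fst p))"
      unfolding gft_def by (simp add: case_prod_beta)
    also have "\<dots> \<le> (\<Sum>p\<in>M'. (vl (snd p) - cu (fst p)) + 2 * \<delta>)"
    proof (intro sum_mono)
      fix p assume "p \<in> M'"
      then have "fst p < n" "snd p < n" using match_range[OF mM'] by auto
      then show "v (snd p) - c (fst p) \<le> (vl (snd p) - cu (fst p)) + 2 * \<delta>"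
        using c_bounds[of "fst p"] v_bounds[of "snd p"] by linarith
    qed
    also have "\<dots> = gft cu vl M' + real (card M') * (2 * \<delta>)"
      unfolding gft_def by (simp add: sum.distrib case_prod_beta)
    also have "\<dots> \<le> gft cu vl M + real n * (2 * \<delta>)"
    proof -
      have "gft cu vl M' \<le> gft cu vl M" using M_opt mM' unfolding gft_optimal_def by blast
      moreover have "real (card M') * (2 * \<delta>) \<le> real n * (2 * \<delta>)"
      proof (cases "n = 0")
        case True then show ?thesis using card_le_n[OF mM'] by simp
      next
        case False then show ?thesis using card_le_n[OF mM'] dpos
          by (intro mult_right_mono) auto
      qed
      ultimately show ?thesis by linarith
    qed
    finally show ?thesis using g2 by linarith
  qed
  have finS: "finite {M. is_matching n M}"
  proof -
    have "{M. is_matching n M} \<subseteq> Pow ({..<n} \<times> {..<n})" unfolding is_matching_def by auto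
    then show ?thesis by (rule finite_subset) auto
  qed
  have ne: "{M. is_matching n M} \<noteq> {}" using mM by auto
  have "GFT_star n c v \<le> gft c v M + 2 * real n * \<delta>"
    unfolding GFT_star_def using finS ne g3 by (subst Max_le_iff) auto
  then show ?thesis using g1 by linarith
qed

end
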